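(* Let $E,A\in\mathbb{R}^{n\times n}$ with $A$ nonsingular, and let $C$ be any matrix with $n$ columns such that for all $x\in\mathbb{R}^n$, $x\in\mathcal{C}(E,A)$ if and only if $Cx=0$. A symmetric matrix $P$ is a Lyapunov matrix for $(E,A)$ if and only if there exist scalars $\kappa_1,\kappa_2\ge 0$ such that $$P+\kappa_1C^TC>0,\qquad PA^{-1}E+E^TA^{-T}P-\kappa_2C^TC<0.$$
   Context: For $E,A\in\mathbb{R}^{n\times n}$ with $A$ nonsingular, $(E,A)$ denotes the linear descriptor system $E\dot x=Ax$. Its index is the smallest integer $k^*\ge 0$ with $\mathrm{Im}((A^{-1}E)^{k^*+1})=\mathrm{Im}((A^{-1}E)^{k^*})$, and its consistency space is $\mathcal{C}(E,A)=\mathrm{Im}((A^{-1}E)^{k^*})$. If $\mathcal{C}\neq\{0\}$, $A^{-1}E$ maps $\mathcal{C}$ bijectively onto itself; with $\tilde A$ the inverse of its restriction to $\mathcal{C}$, the system on $\mathcal{C}$ is equivalent to $\dot x=\tilde A x$. A symmetric matrix $P$ is a Lyapunov matrix for $(E,A)$ if $V(x)=x^TPx$ is positive on $\mathcal{C}\setminus\{0\}$ and its derivative along solutions, $\dot V=2x^TP\tilde A x$, is negative at every nonzero $x\in\mathcal{C}$. Inequalities $M>0$ ($M<0$) for symmetric $M$ mean positive (negative) definite. *)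

theory Defs
  imports "HOL-Analysis.Analysis"
begin

definition AinvE :: "real^'n^'n \<Rightarrow> real^'n^'n \<Rightarrow> real^'n^'n" where
  "AinvE E A = matrix_inv A ** E"

definition mat_pow_image :: "real^'n^'n \<Rightarrow> nat \<Rightarrow> (real^'n) set" where
  "mat_pow_image M k = range (((*v) M) ^^ k)"

definition dae_index :: "real^'n^'n \<Rightarrow> real^'n^'n \<Rightarrow> nat" where
  "dae_index E A =
     (LEAST k. mat_pow_image (AinvE E A) (Suc k) = mat_pow_image (AinvE E A) k)"

definition consistency_space :: "real^'n^'n \<Rightarrow> real^'n^'n \<Rightarrow> (real^'n) set" where
  "consistency_space E A = mat_pow_image (AinvE E A) (dae_index E A)"

definition Atilde :: "real^'n^'n \<Rightarrow> real^'n^'n \<Rightarrow> real^'n \<Rightarrow> real^'n" where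
  "Atilde E A x = (THE y. y \<in> consistency_space E A \<and> AinvE E A *v y = x)"

definition lyapunov_matrix :: "real^'n^'n \<Rightarrow> real^'n^'n \<Rightarrow> real^'n^'n \<Rightarrow> bool" where
  "lyapunov_matrix E A P \<longleftrightarrow>
     transpose P = P \<and>
     (\<forall>x \<in> consistency_space E A. x \<noteq> 0 \<longrightarrow> 0 < x \<bullet> (P *v x)) \<and>
     (\<forall>x \<in> consistency_space E A. x \<noteq> 0 \<longrightarrow> 2 * (x \<bullet> (P *v Atilde E A x)) < 0)"

definition pos_def :: "real^'n^'n \<Rightarrow> bool" where
  "pos_def M \<longleftrightarrow> transpose M = M \<and> (\<forall>x. x \<noteq> 0 \<longrightarrow> 0 < x \<bullet> (M *v x))"

definition neg_def :: "real^'n^'n \<Rightarrow> bool" where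
  "neg_def M \<longleftrightarrow> transpose M = M \<and> (\<forall>x. x \<noteq> 0 \<longrightarrow> x \<bullet> (M *v x) < 0)"

end

theory Submission imports Defs begin
lemma surj_on_subspace_imp_inj:
  fixes f :: "real^'n \<Rightarrow> real^'n"
  assumes lf: "linear f" and sS: "subspace S" and fS: "f ` S = S"
  shows "inj_on f S"
proof -
  obtain B where B: "B \<subseteq> S" "independent B" "S \<subseteq> span B" "card B = dim S"
    using basis_exists[of S] by blast
  have fB: "finite B" using B(2) finiteI_independent by blast
  have spB: "span B = S" using B sS by (simp add: span_subspace)
  have spfB: "span (f ` B) = S" using spB fS span_linear_image[OF lf] by metis
  have c1: "card (f ` B) \<le> dim S" using B(4) card_image_le[OF fB] by simp
  have ind: "independent (f ` B)"
    using card_le_dim_spanning[of "f ` B" S] B(1) fS spfB c1 fB by auto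
  have "dim S \<le> card (f ` B)" using dim_le_card[of S "f ` B"] spfB fB by auto
  then have "card (f ` B) = card B" using c1 B(4) by simp
  then have "inj_on f B" by (simp add: inj_on_iff_eq_card[OF fB])
  then show ?thesis using linear_inj_on_span_iff_independent_image[OF lf ind] spB by simp
qed

lemma mpi_Suc: "mat_pow_image M (Suc k) = (*v) M ` mat_pow_image M k"
  unfolding mat_pow_image_def by (simp add: image_comp)

lemma mpi_Suc_sub: "mat_pow_image M (Suc k) \<subseteq> mat_pow_image M k"
  unfolding mat_pow_image_def by (auto simp del: funpow.simps simp: funpow_Suc_right)

lemma mpi_subspace: "subspace (mat_pow_image (M::real^'n^'n) k)"
proof (induction k)
  case 0
  then show ?case by (simp add: mat_pow_image_def subspace_UNIV)
next
  case (Suc k)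
  then show ?case unfolding mpi_Suc
    using linear_subspace_image[OF matrix_vector_mul_linear[of M] Suc.IH] by simp
qed

lemma mpi_stab: "\<exists>k. mat_pow_image (M::real^'n^'n) (Suc k) = mat_pow_image M k"
proof (rule ccontr)
  assume "\<not> ?thesis"
  then have ne: "\<And>k. mat_pow_image M (Suc k) \<noteq> mat_pow_image M k" by blast
  have lt: "dim (mat_pow_image M (Suc k)) < dim (mat_pow_image M k)" for k
  proof -
    have "dim (mat_pow_image M (Suc k)) \<le> dim (mat_pow_image M k)"
      using dim_subset[OF mpi_Suc_sub] by blast
    moreover have "\<not> dim (mat_pow_image M (Suc k)) \<ge> dim (mat_pow_image M k)"
      using subspace_dim_equal[OF mpi_subspace mpi_subspace mpi_Suc_sub] ne by blast
    ultimately show ?thesis by simp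
  qed
  have "dim (mat_pow_image M k) + k \<le> dim (mat_pow_image M 0)" for k
  proof (induction k)
    case (Suc k) then show ?case using lt[of k] by simp
  qed simp
  from this[of "Suc (dim (mat_pow_image M 0))"] show False by simp
qed

lemma cs_props:
  fixes E A :: "real^'n^'n"
  shows "subspace (consistency_space E A)"
    and "(*v) (AinvE E A) ` consistency_space E A = consistency_space E A"
    and "inj_on ((*v) (AinvE E A)) (consistency_space E A)"
proof -
  let ?M = "AinvE E A"
  show s: "subspace (consistency_space E A)" unfolding consistency_space_def by (rule mpi_subspace)
  have "mat_pow_image ?M (Suc (dae_index E A)) = mat_pow_image ?M (dae_index E A)"
    unfolding dae_index_def by (rule LeastI_ex[OF mpi_stab])
  then show im: "(*v) ?M ` consistency_space E A = consistency_space E A"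
    unfolding consistency_space_def mpi_Suc by simp
  show "inj_on ((*v) ?M) (consistency_space E A)"
    by (rule surj_on_subspace_imp_inj[OF _ s im]) simp
qed

lemma Atilde_props:
  fixes E A :: "real^'n^'n"
  assumes "x \<in> consistency_space E A"
  shows "Atilde E A x \<in> consistency_space E A \<and> AinvE E A *v Atilde E A x = x"
proof -
  have "\<exists>!y. y \<in> consistency_space E A \<and> AinvE E A *v y = x"
    using cs_props(2,3)[of E A] assms by (metis imageE inj_onD)
  then show ?thesis unfolding Atilde_def by (rule theI')
qed

lemma Atilde_inv:
  fixes E A :: "real^'n^'n"
  assumes "y \<in> consistency_space E A"
  shows "Atilde E A (AinvE E A *v y) = y"
  unfolding Atilde_def
  using cs_props(3)[of E A] assms by (intro the_equality) (auto dest: inj_onD)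
lemma qf_scale: "(c *\<^sub>R x) \<bullet> ((M::real^'n^'n) *v (c *\<^sub>R x)) = c^2 * (x \<bullet> (M *v x))"
  by (simp add: matrix_vector_mult_scaleR power2_eq_square)

lemma qf_cont: "continuous_on S (\<lambda>x. x \<bullet> ((M::real^'n^'n) *v x))"
  by (intro continuous_intros)

lemma qf_diff: "x \<bullet> ((Q - k *\<^sub>R R) *v x) = x \<bullet> ((Q::real^'n^'n) *v x) - k * (x \<bullet> (R *v x))"
  by (simp add: matrix_vector_mult_diff_rdistrib scaleR_matrix_vector_assoc[symmetric] inner_diff_right)

lemma finsler:
  fixes Q R :: "real^'n^'n"
  assumes Rpos: "\<forall>x. 0 \<le> x \<bullet> (R *v x)"
    and neg: "\<forall>x. x \<noteq> 0 \<and> x \<bullet> (R *v x) = 0 \<longrightarrow> x \<bullet> (Q *v x) < 0"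
  shows "\<exists>k\<ge>0. \<forall>x. x \<noteq> 0 \<longrightarrow> x \<bullet> ((Q - k *\<^sub>R R) *v x) < 0"
proof -
  define q where "q x = x \<bullet> (Q *v x)" for x
  define g where "g x = x \<bullet> (R *v x)" for x
  have cq: "continuous_on S q" for S unfolding q_def by (rule qf_cont)
  have cg: "continuous_on S g" for S unfolding g_def by (rule qf_cont)
  have sph: "\<exists>k\<ge>0. \<forall>u\<in>sphere 0 1. q u - k * g u < 0"
  proof -
    define K where "K = sphere (0::real^'n) 1 \<inter> {x. 0 \<le> q x}"
    have cK: "compact K" unfolding K_def
      by (intro compact_Int_closed compact_sphere closed_Collect_le continuous_on_const cq)
    show ?thesis
    proof (cases "K = {}")
      case True
      show ?thesis
      proof (intro exI[of _ 0] conjI ballI)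
        fix u :: "real^'n" assume "u \<in> sphere 0 1"
        then have "q u < 0" using True unfolding K_def by auto
        then show "q u - 0 * g u < 0" by simp
      qed simp
    next
      case False
      obtain m where m: "m \<in> K" "\<forall>y\<in>K. g m \<le> g y"
        using continuous_attains_inf[OF cK False cg] by blast
      obtain M where M: "M \<in> K" "\<forall>y\<in>K. q y \<le> q M"
        using continuous_attains_sup[OF cK False cq] by blast
      have qM: "0 \<le> q M" using M(1) unfolding K_def by auto
      have gm: "0 < g m"
      proof -
        have "m \<noteq> 0" "0 \<le> q m" using m(1) unfolding K_def by auto
        moreover have "0 \<le> g m" using Rpos g_def by simp
        ultimately show ?thesis using neg unfolding q_def g_def by force
      qed
      define k where "k = q M / g m + 1"
      have k0: "k \<ge> 0" unfolding k_def using qM gm by simp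
      have kg: "k * g m = q M + g m" unfolding k_def using gm by (simp add: field_simps)
      show ?thesis
      proof (intro exI[of _ k] conjI ballI k0)
        fix u :: "real^'n" assume u: "u \<in> sphere 0 1"
        have gu: "0 \<le> g u" using Rpos g_def by simp
        show "q u - k * g u < 0"
        proof (cases "q u < 0")
          case True
          then show ?thesis using k0 gu by (smt (verit) mult_nonneg_nonneg)
        next
          case False
          then have uK: "u \<in> K" using u unfolding K_def by auto
          have "k * g m \<le> k * g u" using m(2) uK k0 by (simp add: mult_left_mono)
          then show ?thesis using kg M(2) uK gm by smt
        qed
      qed
    qed
  qed
  then obtain k where k: "k \<ge> 0" "\<forall>u\<in>sphere 0 1. q u - k * g u < 0" by blast
  show ?thesis
  proof (intro exI[of _ k] conjI allI impI k(1))
    fix x :: "real^'n" assume x: "x \<noteq> 0"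
    define u where "u = inverse (norm x) *\<^sub>R x"
    have u: "u \<in> sphere 0 1" using x unfolding u_def by (simp add: norm_scaleR)
    have xu: "x = norm x *\<^sub>R u" using x unfolding u_def by simp
    have "x \<bullet> ((Q - k *\<^sub>R R) *v x) = (norm x)^2 * (u \<bullet> ((Q - k *\<^sub>R R) *v u))"
      by (subst xu, subst xu, rule qf_scale)
    also have "\<dots> = (norm x)^2 * (q u - k * g u)" by (simp add: qf_diff q_def g_def)
    also have "\<dots> < 0" using k(2) u x by (simp add: mult_pos_neg)
    finally show "x \<bullet> ((Q - k *\<^sub>R R) *v x) < 0" .
  qed
qed
lemma inner_mv: "x \<bullet> ((M::real^'n^'m) *v y) = (transpose M *v x) \<bullet> y"
  by (simp add: dot_lmul_matrix)

lemma transpose_add': "transpose ((X::real^'n^'n) + Y) = transpose X + transpose Y"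
  by (simp add: transpose_def vec_eq_iff)

lemma transpose_diff': "transpose ((X::real^'n^'n) - Y) = transpose X - transpose Y"
  by (simp add: transpose_def vec_eq_iff)

lemma neg_mv: "(- (M::real^'n^'n)) *v x = - (M *v x)"
  by (simp add: vec_eq_iff matrix_vector_mult_def sum_negf)

lemma qf_add: "x \<bullet> ((P + k *\<^sub>R R) *v x) = x \<bullet> ((P::real^'n^'n) *v x) + k * (x \<bullet> (R *v x))"
  by (simp add: matrix_vector_mult_add_rdistrib scaleR_matrix_vector_assoc[symmetric] inner_add_right)

theorem lemma2:
  fixes E A P :: "real^'n^'n" and C :: "real^'n^'m"
  assumes "invertible A"
    and "\<forall>x. x \<in> consistency_space E A \<longleftrightarrow> C *v x = 0"
    and "transpose P = P"
  shows "lyapunov_matrix E A P \<longleftrightarrow>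
    (\<exists>\<kappa>1 \<kappa>2 :: real. \<kappa>1 \<ge> 0 \<and> \<kappa>2 \<ge> 0 \<and>
       pos_def (P + \<kappa>1 *\<^sub>R (transpose C ** C)) \<and>
       neg_def (P ** matrix_inv A ** E + transpose E ** transpose (matrix_inv A) ** P
                - \<kappa>2 *\<^sub>R (transpose C ** C)))"
proof -
  define N where "N = AinvE E A"
  define S where "S = consistency_space E A"
  define R where "R = transpose C ** C"
  define Q where "Q = P ** matrix_inv A ** E + transpose E ** transpose (matrix_inv A) ** P"
  have symP: "transpose P = P" by fact
  have Qeq: "Q = P ** N + transpose N ** P"
    unfolding Q_def N_def AinvE_def by (simp add: matrix_mul_assoc matrix_transpose_mul)
  have qQ: "y \<bullet> (Q *v y) = 2 * ((N *v y) \<bullet> (P *v y))" for y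
  proof -
    have "Q *v y = P *v (N *v y) + transpose N *v (P *v y)"
      unfolding Qeq by (simp add: matrix_vector_mult_add_rdistrib matrix_vector_mul_assoc)
    then have "y \<bullet> (Q *v y) = (transpose P *v y) \<bullet> (N *v y) + (N *v y) \<bullet> (P *v y)"
      by (simp only: inner_add_right inner_mv transpose_transpose)
    then show ?thesis using symP by (simp add: inner_commute)
  qed
  have gR: "y \<bullet> (R *v y) = (C *v y) \<bullet> (C *v y)" for y
    unfolding R_def matrix_vector_mul_assoc[symmetric] by (simp only: inner_mv transpose_transpose)
  have Rpos: "\<forall>x. 0 \<le> x \<bullet> (R *v x)" using gR by simp
  have ker: "x \<in> S \<longleftrightarrow> x \<bullet> (R *v x) = 0" for x
    using assms(2) gR unfolding S_def by simp
  have tR: "transpose R = R" unfolding R_def by (simp add: matrix_transpose_mul)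
  have tQ: "transpose Q = Q" unfolding Qeq using symP
    by (simp add: transpose_add' matrix_transpose_mul matrix_mul_assoc add.commute)
  have S0: "0 \<in> S" unfolding S_def using cs_props(1) subspace_0 by blast
  have NS: "(*v) N ` S = S" "inj_on ((*v) N) S" unfolding N_def S_def using cs_props(2)[of E A] cs_props(3)[of E A] by simp_all
  have part2: "(\<forall>x\<in>S. x \<noteq> 0 \<longrightarrow> 2 * (x \<bullet> (P *v Atilde E A x)) < 0) \<longleftrightarrow>
               (\<forall>y\<in>S. y \<noteq> 0 \<longrightarrow> y \<bullet> (Q *v y) < 0)"
  proof
    assume H: "\<forall>x\<in>S. x \<noteq> 0 \<longrightarrow> 2 * (x \<bullet> (P *v Atilde E A x)) < 0"
    show "\<forall>y\<in>S. y \<noteq> 0 \<longrightarrow> y \<bullet> (Q *v y) < 0"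
    proof (intro ballI impI)
      fix y assume y: "y \<in> S" "y \<noteq> 0"
      have xS: "N *v y \<in> S" using NS(1) y by blast
      have x0: "N *v y \<noteq> 0" using NS(2) y S0 by (metis inj_onD matrix_vector_mult_0_right)
      have "Atilde E A (N *v y) = y" using Atilde_inv y unfolding N_def S_def by blast
      then show "y \<bullet> (Q *v y) < 0" using H xS x0 qQ by auto
    qed
  next
    assume H: "\<forall>y\<in>S. y \<noteq> 0 \<longrightarrow> y \<bullet> (Q *v y) < 0"
    show "\<forall>x\<in>S. x \<noteq> 0 \<longrightarrow> 2 * (x \<bullet> (P *v Atilde E A x)) < 0"
    proof (intro ballI impI)
      fix x assume x: "x \<in> S" "x \<noteq> 0"
      have yS: "Atilde E A x \<in> S" and Ny: "N *v Atilde E A x = x"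
        using Atilde_props x unfolding N_def S_def by blast+
      have "Atilde E A x \<noteq> 0" using Ny x by auto
      then show "2 * (x \<bullet> (P *v Atilde E A x)) < 0" using H yS qQ[of "Atilde E A x"] Ny by auto
    qed
  qed
  have lyap: "lyapunov_matrix E A P \<longleftrightarrow>
     (\<forall>x. x \<noteq> 0 \<and> x \<bullet> (R *v x) = 0 \<longrightarrow> x \<bullet> ((- P) *v x) < 0) \<and>
     (\<forall>x. x \<noteq> 0 \<and> x \<bullet> (R *v x) = 0 \<longrightarrow> x \<bullet> (Q *v x) < 0)"
    unfolding lyapunov_matrix_def S_def[symmetric] part2 using symP ker
    by (auto simp: neg_mv)
  show ?thesis
    unfolding lyap R_def[symmetric] Q_def[symmetric]
  proof
    assume H: "(\<forall>x. x \<noteq> 0 \<and> x \<bullet> (R *v x) = 0 \<longrightarrow> x \<bullet> ((- P) *v x) < 0) \<and>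
     (\<forall>x. x \<noteq> 0 \<and> x \<bullet> (R *v x) = 0 \<longrightarrow> x \<bullet> (Q *v x) < 0)"
    obtain k1 where k1: "k1 \<ge> 0" "\<forall>x. x \<noteq> 0 \<longrightarrow> x \<bullet> ((- P - k1 *\<^sub>R R) *v x) < 0"
      using finsler[OF Rpos] H by blast
    obtain k2 where k2: "k2 \<ge> 0" "\<forall>x. x \<noteq> 0 \<longrightarrow> x \<bullet> ((Q - k2 *\<^sub>R R) *v x) < 0"
      using finsler[OF Rpos] H by blast
    have "pos_def (P + k1 *\<^sub>R R)"
      unfolding pos_def_def using k1(2) symP tR
      by (auto simp: transpose_add' transpose_scalar qf_add qf_diff neg_mv)
    moreover have "neg_def (Q - k2 *\<^sub>R R)"
      unfolding neg_def_def using k2(2) tQ tR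
      by (auto simp: transpose_diff' transpose_scalar)
    ultimately show "\<exists>\<kappa>1 \<kappa>2. 0 \<le> \<kappa>1 \<and> 0 \<le> \<kappa>2 \<and> pos_def (P + \<kappa>1 *\<^sub>R R) \<and> neg_def (Q - \<kappa>2 *\<^sub>R R)"
      using k1(1) k2(1) by blast
  next
    assume "\<exists>\<kappa>1 \<kappa>2. 0 \<le> \<kappa>1 \<and> 0 \<le> \<kappa>2 \<and> pos_def (P + \<kappa>1 *\<^sub>R R) \<and> neg_def (Q - \<kappa>2 *\<^sub>R R)"
    then obtain k1 k2 where p: "pos_def (P + k1 *\<^sub>R R)" and n: "neg_def (Q - k2 *\<^sub>R R)" by blast
    show "(\<forall>x. x \<noteq> 0 \<and> x \<bullet> (R *v x) = 0 \<longrightarrow> x \<bullet> ((- P) *v x) < 0) \<and>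
     (\<forall>x. x \<noteq> 0 \<and> x \<bullet> (R *v x) = 0 \<longrightarrow> x \<bullet> (Q *v x) < 0)"
      using p n unfolding pos_def_def neg_def_def by (auto simp: qf_add qf_diff neg_mv)
  qed
qed

end
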